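(* Let $(A,G)$ be an admissible pair with $A=(a_{ij})\in M_{Q_0}(\mathbb Z)$, and let $\Omega=\{i_1,\ldots,i_n\}$ be a $G$-orbit in $Q_0$. Then the coefficients $a^{(n)}_{ij}$ of $A^{(n)}=\mu_{i_n}\circ\cdots\circ\mu_{i_1}(A)$ are given by $$a^{(n)}_{ij}=\begin{cases}-a_{ij}&\text{if } i\in\Omega\text{ or } j\in\Omega,\\ a_{ij}+\frac12\sum_{k=1}^n\big(|a_{i,i_k}|a_{i_k,j}+a_{i,i_k}|a_{i_k,j}|\big)&\text{otherwise.}\end{cases}$$
   Context: $Q_0$ finite; $A$ skew-symmetrizable ($DA$ skew-symmetric for a positive integer diagonal $D$). Mutation $\mu_k(B)=(b'_{ij})$: $b'_{ij}=-b_{ij}$ if $k\in\{i,j\}$, else $b_{ij}+\tfrac12(|b_{ik}|b_{kj}+b_{ik}|b_{kj}|)$. An automorphism of $A$ is a permutation $g$ of $Q_0$ with $a_{gi,gj}=a_{ij}$; a group $G$ of such permutations is admissible (and $(A,G)$ an admissible pair) if for distinct $i,j$ in the same $G$-orbit there is no path of length $1$ or $2$ from $i$ to $j$ in the valued quiver of $A$ (i.e. $a_{ij}\le0$ and no $k$ with $a_{ik}>0$, $a_{kj}>0$). *)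

theory Defs
  imports Complex_Main
begin

text \<open>Matrices indexed by a finite index set Q (entries outside Q are irrelevant).\<close>

definition skew_symmetrizable :: "'q set \<Rightarrow> ('q \<Rightarrow> 'q \<Rightarrow> int) \<Rightarrow> bool" where
  "skew_symmetrizable Q A \<longleftrightarrow>
     (\<exists>D :: 'q \<Rightarrow> int. (\<forall>i\<in>Q. D i > 0) \<and>
        (\<forall>i\<in>Q. \<forall>j\<in>Q. D i * A i j = - (D j * A j i)))"

text \<open>Matrix mutation at k; the half-sum is always an integer, so we use integer division
  by 2 which is exact.\<close>
definition mut :: "'q \<Rightarrow> ('q \<Rightarrow> 'q \<Rightarrow> int) \<Rightarrow> ('q \<Rightarrow> 'q \<Rightarrow> int)" where
  "mut k B = (\<lambda>i j. if i = k \<or> j = k then - B i j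
                     else B i j + (\<bar>B i k\<bar> * B k j + B i k * \<bar>B k j\<bar>) div 2)"

definition is_automorphism :: "'q set \<Rightarrow> ('q \<Rightarrow> 'q \<Rightarrow> int) \<Rightarrow> ('q \<Rightarrow> 'q) \<Rightarrow> bool" where
  "is_automorphism Q A g \<longleftrightarrow> bij_betw g Q Q \<and> (\<forall>i\<in>Q. \<forall>j\<in>Q. A (g i) (g j) = A i j)"

definition perm_group_on :: "'q set \<Rightarrow> ('q \<Rightarrow> 'q) set \<Rightarrow> bool" where
  "perm_group_on Q G \<longleftrightarrow> (\<forall>g\<in>G. bij_betw g Q Q)
     \<and> (\<exists>e\<in>G. \<forall>i\<in>Q. e i = i)
     \<and> (\<forall>g\<in>G. \<forall>h\<in>G. \<exists>c\<in>G. \<forall>i\<in>Q. c i = g (h i))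
     \<and> (\<forall>g\<in>G. \<exists>h\<in>G. \<forall>i\<in>Q. h (g i) = i)"

definition admissible_pair :: "'q set \<Rightarrow> ('q \<Rightarrow> 'q \<Rightarrow> int) \<Rightarrow> ('q \<Rightarrow> 'q) set \<Rightarrow> bool" where
  "admissible_pair Q A G \<longleftrightarrow>
     finite Q \<and> skew_symmetrizable Q A \<and> perm_group_on Q G \<and>
     (\<forall>g\<in>G. is_automorphism Q A g) \<and>
     (\<forall>i\<in>Q. \<forall>g\<in>G. g i \<noteq> i \<longrightarrow>
        A i (g i) \<le> 0 \<and> \<not> (\<exists>k\<in>Q. A i k > 0 \<and> A k (g i) > 0))"

definition G_orbit :: "('q \<Rightarrow> 'q) set \<Rightarrow> 'q \<Rightarrow> 'q set" where
  "G_orbit G i = (\<lambda>g. g i) ` G"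

end

theory Submission
  imports Defs
begin

lemma gen:
  assumes "distinct ks" "set ks \<inter> R = {}" "\<forall>a\<in>set ks \<union> R. \<forall>b\<in>set ks \<union> R. A a b = 0"
  shows "foldl (\<lambda>B k. mut k B) A ks i j =
    (if i \<in> set ks \<or> j \<in> set ks then - A i j else if i \<in> R \<or> j \<in> R then A i j
     else A i j + sum_list (map (\<lambda>k. (\<bar>A i k\<bar> * A k j + A i k * \<bar>A k j\<bar>) div 2) ks))"
  using assms
proof (induction ks arbitrary: R i j rule: rev_induct)
  case Nil
  then show ?case by simp
next
  case (snoc x xs)
  have IH: "\<And>i j. foldl (\<lambda>B k. mut k B) A xs i j =
    (if i \<in> set xs \<or> j \<in> set xs then - A i j else if i \<in> insert x R \<or> j \<in> insert x R then A i j
     else A i j + sum_list (map (\<lambda>k. (\<bar>A i k\<bar> * A k j + A i k * \<bar>A k j\<bar>) div 2) xs))"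
    using snoc by (intro snoc.IH) auto
  have z: "\<And>a b. a \<in> set xs \<union> insert x R \<Longrightarrow> b \<in> set xs \<union> insert x R \<Longrightarrow> A a b = 0"
    using snoc.prems by auto
  have xn: "x \<notin> set xs" "x \<notin> R" using snoc.prems by auto
  define B where "B = foldl (\<lambda>B k. mut k B) A xs"
  define S where "S = (\<lambda>i j. sum_list (map (\<lambda>k. (\<bar>A i k\<bar> * A k j + A i k * \<bar>A k j\<bar>) div 2) xs))"
  have IHB: "\<And>i j. B i j = (if i \<in> set xs \<or> j \<in> set xs then - A i j else if i \<in> insert x R \<or> j \<in> insert x R then A i j
     else A i j + S i j)" unfolding B_def S_def by (rule IH)
  have lhs: "foldl (\<lambda>B k. mut k B) A (xs @ [x]) i j = mut x B i j"
    by (simp add: B_def)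
  have rhs: "sum_list (map (\<lambda>k. (\<bar>A i k\<bar> * A k j + A i k * \<bar>A k j\<bar>) div 2) (xs @ [x]))
     = S i j + (\<bar>A i x\<bar> * A x j + A i x * \<bar>A x j\<bar>) div 2" by (simp add: S_def)
  have sx: "set (xs @ [x]) = insert x (set xs)" by simp
  have main: "mut x B i j = (if i \<in> insert x (set xs) \<or> j \<in> insert x (set xs) then - A i j
     else if i \<in> R \<or> j \<in> R then A i j
     else A i j + (S i j + (\<bar>A i x\<bar> * A x j + A i x * \<bar>A x j\<bar>) div 2))"
  proof (cases "i = x \<or> j = x")
    case True
    then have m: "mut x B i j = - B i j" by (simp add: mut_def)
    have c: "i \<in> insert x (set xs) \<or> j \<in> insert x (set xs)" using True by auto
    show ?thesis
    proof (cases "i \<in> set xs \<or> j \<in> set xs")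
      case True2: True
      have "i \<in> set xs \<union> insert x R" "j \<in> set xs \<union> insert x R" using True True2 xn by auto
      then have "A i j = 0" by (rule z)
      moreover have "B i j = - A i j" using IHB[of i j] True2 by simp
      ultimately show ?thesis unfolding if_P[OF c] using m by simp
    next
      case False
      have "B i j = A i j" using IHB[of i j] True False by auto
      then show ?thesis unfolding if_P[OF c] using m by simp
    qed
  next
    case False
    then have m: "mut x B i j = B i j + (\<bar>B i x\<bar> * B x j + B i x * \<bar>B x j\<bar>) div 2"
      by (simp add: mut_def)
    have bix: "B i x = (if i \<in> set xs then - A i x else A i x)"
      using IHB[of i x] xn by simp
    have bxj: "B x j = (if j \<in> set xs then - A x j else A x j)"
      using IHB[of x j] xn by simp
    show ?thesis
    proof (cases "i \<in> set xs \<union> R \<or> j \<in> set xs \<union> R")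
      case True
      then have "A i x = 0 \<or> A x j = 0" using z[of i x] z[of x j] by auto
      then have "(\<bar>B i x\<bar> * B x j + B i x * \<bar>B x j\<bar>) div 2 = 0"
        using bix bxj by auto
      then have "mut x B i j = B i j" using m by simp
      moreover have "B i j = (if i \<in> set xs \<or> j \<in> set xs then - A i j else A i j)"
        using IHB[of i j] True by auto
      ultimately show ?thesis using True False by auto
    next
      case F2: False
      then have "B i x = A i x" "B x j = A x j" using bix bxj by auto
      moreover have "B i j = A i j + S i j" using IHB[of i j] F2 False by auto
      ultimately show ?thesis using m False F2 by simp
    qed
  qed
  show ?case
    apply (subst lhs) apply (subst rhs) apply (subst sx)+ apply (subst main)
    apply (rule refl)
    done
qed

lemma even_term: "even (\<bar>a\<bar> * b + a * \<bar>b\<bar> :: int)"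
proof -
  have "\<exists>c. \<bar>a\<bar> * b + a * \<bar>b\<bar> = 2 * c"
  proof (cases "a \<ge> 0"; cases "b \<ge> 0")
    assume "a \<ge> 0" "b \<ge> 0" then show ?thesis by (intro exI[of _ "a*b"]) simp
  next
    assume "a \<ge> 0" "\<not> b \<ge> 0" then show ?thesis by (intro exI[of _ 0]) simp
  next
    assume "\<not> a \<ge> 0" "b \<ge> 0" then show ?thesis by (intro exI[of _ 0]) simp
  next
    assume "\<not> a \<ge> 0" "\<not> b \<ge> 0" then show ?thesis by (intro exI[of _ "- (a*b)"]) simp
  qed
  then show ?thesis by auto
qed

lemma real_half: "real_of_int ((\<bar>a\<bar> * b + a * \<bar>b\<bar>) div 2) = (1/2) * real_of_int (\<bar>a\<bar> * b + a * \<bar>b\<bar>)"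
proof -
  obtain c where "\<bar>a\<bar> * b + a * \<bar>b\<bar> = 2 * c" using even_term[of a b] by blast
  then show ?thesis by simp
qed

lemma orbit_zero:
  assumes adm: "admissible_pair Q A G" and i0: "i0 \<in> Q"
    and a: "a \<in> G_orbit G i0" and b: "b \<in> G_orbit G i0"
  shows "A a b = 0"
proof -
  from adm have fin: "finite Q" and sk: "skew_symmetrizable Q A" and pg: "perm_group_on Q G"
    and ad: "\<forall>i\<in>Q. \<forall>g\<in>G. g i \<noteq> i \<longrightarrow> A i (g i) \<le> 0 \<and> \<not> (\<exists>k\<in>Q. A i k > 0 \<and> A k (g i) > 0)"
    unfolding admissible_pair_def by auto
  obtain D where Dp: "\<forall>i\<in>Q. D i > 0" and Ds: "\<forall>i\<in>Q. \<forall>j\<in>Q. D i * A i j = - (D j * A j i)"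
    using sk unfolding skew_symmetrizable_def by auto
  from a obtain g where g: "g \<in> G" "a = g i0" unfolding G_orbit_def by auto
  from b obtain h where h: "h \<in> G" "b = h i0" unfolding G_orbit_def by auto
  have pg': "(\<forall>g\<in>G. bij_betw g Q Q)
     \<and> (\<exists>e\<in>G. \<forall>i\<in>Q. e i = i)
     \<and> (\<forall>g\<in>G. \<forall>h\<in>G. \<exists>c\<in>G. \<forall>i\<in>Q. c i = g (h i))
     \<and> (\<forall>g\<in>G. \<exists>h\<in>G. \<forall>i\<in>Q. h (g i) = i)" using pg unfolding perm_group_on_def by blast
  have bij: "\<And>f. f \<in> G \<Longrightarrow> bij_betw f Q Q" using pg' by blast
  have cmp: "\<forall>g\<in>G. \<forall>h\<in>G. \<exists>c\<in>G. \<forall>i\<in>Q. c i = g (h i)" using pg' by blast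
  have inv: "\<forall>g\<in>G. \<exists>h\<in>G. \<forall>i\<in>Q. h (g i) = i" using pg' by blast
  have aQ: "a \<in> Q" using bij[OF g(1)] i0 g(2) by (auto dest: bij_betw_apply)
  have bQ: "b \<in> Q" using bij[OF h(1)] i0 h(2) by (auto dest: bij_betw_apply)
  have trans: "\<And>g h. g \<in> G \<Longrightarrow> h \<in> G \<Longrightarrow> \<exists>c\<in>G. c (g i0) = h i0"
  proof -
    fix g h assume gG: "g \<in> G" and hG: "h \<in> G"
    obtain gi where gi: "gi \<in> G" "\<forall>i\<in>Q. gi (g i) = i" using inv gG by blast
    obtain c where c: "c \<in> G" "\<forall>i\<in>Q. c i = h (gi i)" using cmp gi(1) hG by blast
    have "g i0 \<in> Q" using bij[OF gG] i0 by (auto dest: bij_betw_apply)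
    then have "c (g i0) = h i0" using c gi i0 by auto
    then show "\<exists>c\<in>G. c (g i0) = h i0" using c by blast
  qed
  show ?thesis
  proof (cases "a = b")
    case True
    have "D a * A a a = - (D a * A a a)" using bspec[OF bspec[OF Ds aQ] aQ] .
    moreover have "D a > 0" using bspec[OF Dp aQ] .
    ultimately show ?thesis using True by simp
  next
    case False
    obtain c where c: "c \<in> G" "c a = b" using trans[OF g(1) h(1)] unfolding g(2) h(2) by blast
    obtain c' where c': "c' \<in> G" "c' b = a" using trans[OF h(1) g(1)] unfolding g(2) h(2) by blast
    have 1: "A a b \<le> 0" using bspec[OF bspec[OF ad aQ] c(1)] False c(2) by simp
    have 2: "A b a \<le> 0" using bspec[OF bspec[OF ad bQ] c'(1)] False c'(2) by simp
    have "D a * A a b = - (D b * A b a)" using bspec[OF bspec[OF Ds aQ] bQ] .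
    moreover have "D a > 0" "D b > 0" using bspec[OF Dp aQ] bspec[OF Dp bQ] by auto
    ultimately have "D a * A a b \<ge> 0" using 2 by (simp add: mult_nonneg_nonpos)
    then have "A a b \<ge> 0" using \<open>D a > 0\<close> by (simp add: zero_le_mult_iff)
    with 1 show ?thesis by simp
  qed
qed

theorem mainTheorem8:
  fixes Q :: "'q set" and A :: "'q \<Rightarrow> 'q \<Rightarrow> int" and G :: "('q \<Rightarrow> 'q) set"
    and ks :: "'q list" and i0 :: 'q
  assumes "admissible_pair Q A G"
    and "i0 \<in> Q"
    and "distinct ks" and "set ks = G_orbit G i0"
  shows "\<forall>i\<in>Q. \<forall>j\<in>Q.
    real_of_int (foldl (\<lambda>B k. mut k B) A ks i j) =
      (if i \<in> set ks \<or> j \<in> set ks then - real_of_int (A i j)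
       else real_of_int (A i j) + (1/2) * (\<Sum>k<length ks.
          real_of_int (\<bar>A i (ks ! k)\<bar> * A (ks ! k) j + A i (ks ! k) * \<bar>A (ks ! k) j\<bar>)))"
proof (intro ballI)
  fix i j
  have z: "\<forall>a\<in>set ks \<union> {}. \<forall>b\<in>set ks \<union> {}. A a b = 0"
    using orbit_zero[OF assms(1,2)] assms(4) by auto
  have eq: "foldl (\<lambda>B k. mut k B) A ks i j =
    (if i \<in> set ks \<or> j \<in> set ks then - A i j else if i \<in> {} \<or> j \<in> {} then A i j
     else A i j + sum_list (map (\<lambda>k. (\<bar>A i k\<bar> * A k j + A i k * \<bar>A k j\<bar>) div 2) ks))"
    using gen[OF assms(3) _ z] by simp
  have s: "real_of_int (sum_list (map (\<lambda>k. (\<bar>A i k\<bar> * A k j + A i k * \<bar>A k j\<bar>) div 2) ks))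
     = (1/2) * (\<Sum>k<length ks.
          real_of_int (\<bar>A i (ks ! k)\<bar> * A (ks ! k) j + A i (ks ! k) * \<bar>A (ks ! k) j\<bar>))"
    by (simp add: sum_list_sum_nth atLeast0LessThan real_half sum_distrib_left)
  show "real_of_int (foldl (\<lambda>B k. mut k B) A ks i j) =
      (if i \<in> set ks \<or> j \<in> set ks then - real_of_int (A i j)
       else real_of_int (A i j) + (1/2) * (\<Sum>k<length ks.
          real_of_int (\<bar>A i (ks ! k)\<bar> * A (ks ! k) j + A i (ks ! k) * \<bar>A (ks ! k) j\<bar>)))"
    using eq s by simp
qed

end
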